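(* For every $n\ge1$ and every integer $k\ge0$, the set of SR states $c$ on $K_n^0$ with $\sum_{i=1}^n c_i-\binom{n}{2}=k$ equals the set of integer lattice points of the convex hull (in $\mathbb{R}^n$) of the set of DR states $c$ on $K_n^0$ with $\sum_{i=1}^n c_i-\binom{n}{2}=k$.
   Context: $K_n^0$ is the complete graph on vertex set $\{0,1,\dots,n\}$ with sink $0$; every vertex has degree $n$. A configuration is $c\in\mathbb{Z}_{\ge0}^n$, stable if $c_i\le n-1$ for all $i$. ASM: an unstable vertex topples by sending one grain to each neighbour (grains to the sink disappear). SSM (parameter $p\in(0,1)$): an unstable vertex $i$, independently for each incident edge, sends one grain along it with probability $p$, otherwise keeps it. Each model gives a Markov chain on stable configurations: add a grain at vertex $i$ with probability $\mu_i>0$, then stabilise. DR = recurrent for the ASM chain, SR = recurrent for the SSM chain. The quantity $\sum_i c_i-\binom n2$ is the level of $c$. *)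

theory Defs
  imports "HOL-Analysis.Analysis"
begin

text \<open>The non-sink vertices of K_n^0 are the elements of a finite type 'n
  with n = CARD('n) (so n \<ge> 1 automatically); the sink is not represented.
  Every non-sink vertex i is adjacent to the sink and to all j \<noteq> i, so has
  degree n.\<close>

definition stable :: "('n::finite \<Rightarrow> nat) \<Rightarrow> bool" where
  "stable c \<longleftrightarrow> (\<forall>i. c i \<le> CARD('n) - 1)"

definition level :: "('n::finite \<Rightarrow> nat) \<Rightarrow> int" where
  "level c = int (\<Sum>i\<in>UNIV. c i) - int (CARD('n) choose 2)"

definition add_grain :: "'n \<Rightarrow> ('n \<Rightarrow> nat) \<Rightarrow> ('n \<Rightarrow> nat)" where
  "add_grain i c = c(i := c i + 1)"

definition asm_topple :: "'n::finite \<Rightarrow> ('n \<Rightarrow> nat) \<Rightarrow> ('n \<Rightarrow> nat) \<Rightarrow> bool" where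
  "asm_topple i c c' \<longleftrightarrow> CARD('n) \<le> c i \<and>
     c' = (\<lambda>j. if j = i then c i - CARD('n) else c j + 1)"

text \<open>SSM toppling of the unstable vertex i: the set of edges along which a grain
  is sent consists of the edge to the sink (if b) and the edges to the vertices in S;
  this choice has probability p^m (1-p)^(n-m), m = number of chosen edges, and
  only choices of positive probability are possible outcomes.\<close>
definition ssm_topple :: "real \<Rightarrow> 'n::finite \<Rightarrow> ('n \<Rightarrow> nat) \<Rightarrow> ('n \<Rightarrow> nat) \<Rightarrow> bool" where
  "ssm_topple p i c c' \<longleftrightarrow> CARD('n) \<le> c i \<and>
     (\<exists>(b::bool) (S::'n set). i \<notin> S \<and>
        (let m = card S + (if b then 1 else 0) in
          p ^ m * (1 - p) ^ (CARD('n) - m) > 0 \<and>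
          c' = (\<lambda>j. if j = i then c i - m else if j \<in> S then c j + 1 else c j)))"

definition asm_stab :: "('n::finite \<Rightarrow> nat) \<Rightarrow> ('n \<Rightarrow> nat) \<Rightarrow> bool" where
  "asm_stab c c' \<longleftrightarrow> (\<lambda>x y. \<exists>i. asm_topple i x y)\<^sup>*\<^sup>* c c' \<and> stable c'"

definition ssm_stab :: "real \<Rightarrow> ('n::finite \<Rightarrow> nat) \<Rightarrow> ('n \<Rightarrow> nat) \<Rightarrow> bool" where
  "ssm_stab p c c' \<longleftrightarrow> (\<lambda>x y. \<exists>i. ssm_topple p i x y)\<^sup>*\<^sup>* c c' \<and> stable c'"

text \<open>Transitions of positive probability of the Markov chains on stable
  configurations (add a grain at i with probability \<mu> i, then stabilise).\<close>
definition asm_trans :: "('n::finite \<Rightarrow> real) \<Rightarrow> ('n \<Rightarrow> nat) \<Rightarrow> ('n \<Rightarrow> nat) \<Rightarrow> bool" where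
  "asm_trans \<mu> c c' \<longleftrightarrow> stable c \<and> (\<exists>i. \<mu> i > 0 \<and> asm_stab (add_grain i c) c')"

definition ssm_trans :: "real \<Rightarrow> ('n::finite \<Rightarrow> real) \<Rightarrow> ('n \<Rightarrow> nat) \<Rightarrow> ('n \<Rightarrow> nat) \<Rightarrow> bool" where
  "ssm_trans p \<mu> c c' \<longleftrightarrow> stable c \<and> (\<exists>i. \<mu> i > 0 \<and> ssm_stab p (add_grain i c) c')"

text \<open>Recurrence for a finite-state Markov chain, given by its graph of
  positive-probability transitions: every state reachable from c leads back to c.\<close>
definition recurrent :: "('a \<Rightarrow> 'a \<Rightarrow> bool) \<Rightarrow> 'a \<Rightarrow> bool" where
  "recurrent T c \<longleftrightarrow> (\<forall>d. T\<^sup>*\<^sup>* c d \<longrightarrow> T\<^sup>*\<^sup>* d c)"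

definition DR :: "('n::finite \<Rightarrow> real) \<Rightarrow> ('n \<Rightarrow> nat) \<Rightarrow> bool" where
  "DR \<mu> c \<longleftrightarrow> stable c \<and> recurrent (asm_trans \<mu>) c"

definition SR :: "real \<Rightarrow> ('n::finite \<Rightarrow> real) \<Rightarrow> ('n \<Rightarrow> nat) \<Rightarrow> bool" where
  "SR p \<mu> c \<longleftrightarrow> stable c \<and> recurrent (ssm_trans p \<mu>) c"

definition to_vec :: "('n::finite \<Rightarrow> nat) \<Rightarrow> real ^ 'n" where
  "to_vec c = (\<chi> i. real (c i))"

end

theory Submission
  imports Defs
begin

lemma sum_two_pts:
  fixes f :: "'n::finite \<Rightarrow> 'a::comm_monoid_add"
  assumes "u \<noteq> v"
  shows "sum f UNIV = f u + f v + sum f (UNIV - {u, v})"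
proof -
  have "sum f UNIV = f u + sum f (UNIV - {u})" by (simp add: sum.remove)
  also have "sum f (UNIV - {u}) = f v + sum f (UNIV - {u} - {v})"
    using assms by (subst sum.remove[of _ v]) auto
  also have "UNIV - {u} - {v} = UNIV - {u, v}" by auto
  finally show ?thesis by (simp add: add.assoc)
qed

lemma sum_ind_card:
  fixes A S :: "'a set"
  assumes "finite A"
  shows "(\<Sum>w\<in>A. if w \<in> S then 1 else 0) = (card (A \<inter> S) :: nat)"
  using assms by (simp add: sum.If_cases Int_commute)

lemma card_ge1: "1 \<le> CARD('n::finite)"
  by (simp add: Suc_leI finite_UNIV_card_ge_0)

definition astep :: "('n::finite \<Rightarrow> nat) \<Rightarrow> ('n \<Rightarrow> nat) \<Rightarrow> bool" where
  "astep x y \<longleftrightarrow> (\<exists>i. asm_topple i x y)"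

lemma asm_topple_sum:
  fixes c :: "'n::finite \<Rightarrow> nat"
  assumes "asm_topple i c c'"
  shows "sum c' UNIV + 1 = sum c UNIV"
proof -
  have ci: "CARD('n) \<le> c i" and c': "c' = (\<lambda>j. if j = i then c i - CARD('n) else c j + 1)"
    using assms by (auto simp: asm_topple_def)
  have "sum c' UNIV = c' i + sum c' (UNIV - {i})" by (simp add: sum.remove)
  also have "sum c' (UNIV - {i}) = sum (\<lambda>j. c j + 1) (UNIV - {i})"
    by (rule sum.cong) (auto simp: c')
  also have "\<dots> = sum c (UNIV - {i}) + card (UNIV - {i::'n})"
    by (simp add: sum_Suc)
  also have "card (UNIV - {i::'n}) = CARD('n) - 1"
    by (simp add: card_Diff_singleton)
  finally have A: "sum c' UNIV = c' i + (sum c (UNIV - {i}) + (CARD('n) - 1))" .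
  have "c' i = c i - CARD('n)" by (simp add: c')
  with A have "sum c' UNIV = c i - CARD('n) + (sum c (UNIV - {i}) + (CARD('n) - 1))" by simp
  moreover have "sum c UNIV = c i + sum c (UNIV - {i})" by (simp add: sum.remove)
  ultimately show ?thesis using ci card_ge1[where 'n='n] by linarith
qed

lemma unstable_ex: "\<not> stable (c::'n::finite \<Rightarrow> nat) \<Longrightarrow> \<exists>i. CARD('n) \<le> c i"
proof -
  assume "\<not> stable c"
  then obtain i where "\<not> c i \<le> CARD('n) - 1" unfolding stable_def by blast
  then have "CARD('n) \<le> c i" using card_ge1[where 'n='n] by linarith
  then show ?thesis by blast
qed

lemma stable_no_atopple: "stable (c::'n::finite \<Rightarrow> nat) \<Longrightarrow> \<not> asm_topple i c c'"
  unfolding stable_def asm_topple_def using card_ge1[where 'n='n]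
  by (metis Suc_pred' diff_Suc_less le_trans less_le_not_le zero_less_one linorder_not_le)

lemma astep_exists: "\<exists>s. astep\<^sup>*\<^sup>* (c::'n::finite \<Rightarrow> nat) s \<and> stable s"
proof (induction "sum c UNIV" arbitrary: c rule: less_induct)
  case less
  show ?case
  proof (cases "stable c")
    case True then show ?thesis by blast
  next
    case False
    then obtain i where i: "CARD('n) \<le> c i" using unstable_ex by blast
    define c' where "c' = (\<lambda>j. if j = i then c i - CARD('n) else c j + 1)"
    have t: "asm_topple i c c'" using i by (simp add: asm_topple_def c'_def)
    have "sum c' UNIV < sum c UNIV" using asm_topple_sum[OF t] by simp
    then obtain s where "astep\<^sup>*\<^sup>* c' s" "stable s" using less by blast
    moreover have "astep c c'" using t astep_def by blast
    ultimately show ?thesis by (meson converse_rtranclp_into_rtranclp)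
  qed
qed

lemma atopple_det: "asm_topple i c c1 \<Longrightarrow> asm_topple i c c2 \<Longrightarrow> c1 = c2"
  by (simp add: asm_topple_def)

lemma atopple_commute:
  fixes c :: "'n::finite \<Rightarrow> nat"
  assumes "i \<noteq> j" "asm_topple i c c1" "asm_topple j c c2"
  shows "\<exists>c12. asm_topple j c1 c12 \<and> asm_topple i c2 c12"
proof -
  define c12 where "c12 = (\<lambda>w. if w = i then c i - CARD('n) + 1 else if w = j then c j - CARD('n) + 1 else c w + 2)"
  have "asm_topple j c1 c12" "asm_topple i c2 c12"
    using assms unfolding asm_topple_def c12_def by (auto simp: fun_eq_iff)
  then show ?thesis by blast
qed

lemma astep_unique:
  "astep\<^sup>*\<^sup>* (c::'n::finite \<Rightarrow> nat) s1 \<Longrightarrow> stable s1 \<Longrightarrow> astep\<^sup>*\<^sup>* c s2 \<Longrightarrow> stable s2 \<Longrightarrow> s1 = s2"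
proof (induction "sum c UNIV" arbitrary: c s1 s2 rule: less_induct)
  case less
  show ?case
  proof (cases "stable c")
    case True
    have "\<And>s. astep\<^sup>*\<^sup>* c s \<Longrightarrow> s = c"
      by (erule converse_rtranclpE) (use True stable_no_atopple astep_def in metis)+
    then show ?thesis using less by metis
  next
    case False
    from less(2) obtain c1 where s1: "astep c c1" "astep\<^sup>*\<^sup>* c1 s1"
      by (rule converse_rtranclpE) (use False less(3) in auto)
    from less(4) obtain c2 where s2: "astep c c2" "astep\<^sup>*\<^sup>* c2 s2"
      by (rule converse_rtranclpE) (use False less(5) in auto)
    obtain i where i: "asm_topple i c c1" using s1 astep_def by blast
    obtain j where j: "asm_topple j c c2" using s2 astep_def by blast
    have lt1: "sum c1 UNIV < sum c UNIV" using asm_topple_sum[OF i] by simp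
    have lt2: "sum c2 UNIV < sum c UNIV" using asm_topple_sum[OF j] by simp
    show ?thesis
    proof (cases "i = j")
      case True
      then have "c1 = c2" using i j atopple_det by blast
      then show ?thesis using less(1)[OF lt1 s1(2) less(3)] s2(2) less(5) by blast
    next
      case False
      obtain c12 where c12: "asm_topple j c1 c12" "asm_topple i c2 c12"
        using atopple_commute[OF False i j] by blast
      obtain s where s: "astep\<^sup>*\<^sup>* c12 s" "stable s" using astep_exists by blast
      have "astep\<^sup>*\<^sup>* c1 s" using c12(1) s(1) astep_def
        by (meson converse_rtranclp_into_rtranclp)
      then have "s1 = s" using less(1)[OF lt1 s1(2) less(3)] s(2) by blast
      moreover have "astep\<^sup>*\<^sup>* c2 s" using c12(2) s(1) astep_def
        by (meson converse_rtranclp_into_rtranclp)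
      then have "s2 = s" using less(1)[OF lt2 s2(2) less(5)] s(2) by blast
      ultimately show ?thesis by simp
    qed
  qed
qed

lemma atopple_mono:
  "asm_topple i c c' \<Longrightarrow> asm_topple i (\<lambda>w. c w + e w) (\<lambda>w. c' w + e w)"
  unfolding asm_topple_def by (auto simp: fun_eq_iff)

lemma astep_mono:
  "astep\<^sup>*\<^sup>* c c' \<Longrightarrow> astep\<^sup>*\<^sup>* (\<lambda>w. c w + e w) (\<lambda>w. c' w + e w)"
proof (induction rule: rtranclp_induct)
  case base then show ?case by simp
next
  case (step y z)
  then show ?case using atopple_mono astep_def
    by (metis (mono_tags, lifting) rtranclp.rtrancl_into_rtrancl)
qed

definition stab :: "('n::finite \<Rightarrow> nat) \<Rightarrow> ('n \<Rightarrow> nat)" where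
  "stab c = (THE s. astep\<^sup>*\<^sup>* c s \<and> stable s)"

lemma stab: "astep\<^sup>*\<^sup>* c (stab c) \<and> stable (stab c)"
proof -
  have "\<exists>!s. astep\<^sup>*\<^sup>* c s \<and> stable s" using astep_exists astep_unique by blast
  then show ?thesis unfolding stab_def by (rule theI')
qed

lemma stab_eq: "astep\<^sup>*\<^sup>* c s \<Longrightarrow> stable s \<Longrightarrow> stab c = s"
  using stab astep_unique by blast

definition Mx :: "'n::finite \<Rightarrow> nat" where "Mx = (\<lambda>_. CARD('n) - 1)"

lemma stable_Mx: "stable Mx" by (simp add: stable_def Mx_def)

lemma astep_eq: "(\<lambda>x y. \<exists>i. asm_topple i x y) = astep"
  by (simp add: fun_eq_iff astep_def)

lemma asm_trans_stable: "asm_trans \<mu> c d \<Longrightarrow> stable d"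
  by (auto simp: asm_trans_def asm_stab_def)

lemma asm_trans_star_stable: "(asm_trans \<mu>)\<^sup>*\<^sup>* c d \<Longrightarrow> stable c \<Longrightarrow> stable d"
  by (induction rule: rtranclp_induct) (auto dest: asm_trans_stable)

lemma reach_M_asm:
  fixes c :: "'n::finite \<Rightarrow> nat"
  assumes mu: "\<forall>i. \<mu> i > 0"
  shows "stable c \<Longrightarrow> (asm_trans \<mu>)\<^sup>*\<^sup>* c Mx"
proof (induction "\<Sum>w\<in>UNIV. CARD('n) - 1 - c w" arbitrary: c rule: less_induct)
  case less
  show ?case
  proof (cases "c = Mx")
    case True then show ?thesis by simp
  next
    case False
    then obtain i where i: "c i < CARD('n) - 1"
      using less(2) unfolding stable_def Mx_def by (meson ext le_neq_implies_less)
    define c' where "c' = add_grain i c"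
    have st: "stable c'" using less(2) i unfolding stable_def c'_def add_grain_def by auto
    have tr: "asm_trans \<mu> c c'" unfolding asm_trans_def asm_stab_def
      using less(2) st mu c'_def by (intro conjI exI[of _ i]) auto
    have "(\<Sum>w\<in>UNIV. CARD('n) - 1 - c' w) < (\<Sum>w\<in>UNIV. CARD('n) - 1 - c w)"
    proof (rule sum_strict_mono_ex1)
      show "\<forall>x\<in>UNIV. CARD('n) - 1 - c' x \<le> CARD('n) - 1 - c x"
        by (auto simp: c'_def add_grain_def)
      show "\<exists>a\<in>UNIV. CARD('n) - 1 - c' a < CARD('n) - 1 - c a"
        using i by (auto simp: c'_def add_grain_def intro!: bexI[of _ i])
    qed simp
    then have "(asm_trans \<mu>)\<^sup>*\<^sup>* c' Mx" using less(1) st by blast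
    then show ?thesis using tr by (meson converse_rtranclp_into_rtranclp)
  qed
qed

lemma reach_stab:
  fixes e :: "'n::finite \<Rightarrow> nat"
  assumes mu: "\<forall>i. \<mu> i > 0"
  shows "(asm_trans \<mu>)\<^sup>*\<^sup>* Mx (stab (\<lambda>w. Mx w + e w))"
proof (induction "sum e UNIV" arbitrary: e)
  case 0
  then have "e = (\<lambda>_. 0)" by (simp add: fun_eq_iff)
  then have "stab (\<lambda>w. Mx w + e w) = Mx" using stab_eq[OF rtranclp.rtrancl_refl stable_Mx] by simp
  then show ?case by simp
next
  case (Suc k)
  from Suc(2) have "sum e UNIV \<noteq> 0" by linarith
  then obtain i where i: "e i > 0" by (metis sum.neutral neq0_conv)
  define e' where "e' = e(i := e i - 1)"
  have "sum e UNIV = e i + sum e (UNIV - {i})" by (simp add: sum.remove)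
  moreover have "sum e' UNIV = e' i + sum e' (UNIV - {i})" by (simp add: sum.remove)
  moreover have "sum e' (UNIV - {i}) = sum e (UNIV - {i})" by (rule sum.cong) (auto simp: e'_def)
  ultimately have "k = sum e' UNIV" using Suc(2) i by (simp add: e'_def)
  then have IH: "(asm_trans \<mu>)\<^sup>*\<^sup>* Mx (stab (\<lambda>w. Mx w + e' w))" using Suc(1) by blast
  define s' where "s' = stab (\<lambda>w. Mx w + e' w)"
  define s where "s = stab (add_grain i s')"
  have "astep\<^sup>*\<^sup>* (\<lambda>w. Mx w + e' w) s'" using stab s'_def by blast
  then have "astep\<^sup>*\<^sup>* (\<lambda>w. Mx w + e' w + (if w = i then 1 else 0)) (\<lambda>w. s' w + (if w = i then 1 else 0))"
    by (rule astep_mono)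
  moreover have "(\<lambda>w. Mx w + e' w + (if w = i then 1 else 0)) = (\<lambda>w. Mx w + e w)"
    using i by (auto simp: e'_def fun_eq_iff)
  moreover have "(\<lambda>w. s' w + (if w = i then 1 else 0)) = add_grain i s'"
    by (auto simp: add_grain_def fun_eq_iff)
  ultimately have "astep\<^sup>*\<^sup>* (\<lambda>w. Mx w + e w) (add_grain i s')" by simp
  then have "astep\<^sup>*\<^sup>* (\<lambda>w. Mx w + e w) s" using stab s_def by (meson rtranclp_trans)
  then have eq: "stab (\<lambda>w. Mx w + e w) = s" using stab_eq stab s_def by blast
  have "asm_trans \<mu> s' s" unfolding asm_trans_def asm_stab_def astep_eq
  proof (intro conjI exI[of _ i])
    show "stable s'" using stab s'_def by blast
    show "0 < \<mu> i" using mu by blast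
    show "astep\<^sup>*\<^sup>* (add_grain i s') s" using stab s_def by blast
    show "stable s" using stab s_def by blast
  qed
  then show ?case using IH eq s'_def by (metis rtranclp.rtrancl_into_rtrancl)
qed

definition Yc :: "('n::finite \<Rightarrow> nat) \<Rightarrow> bool" where
  "Yc c \<longleftrightarrow> (\<forall>A. A \<noteq> {} \<longrightarrow> (\<exists>w\<in>A. card A \<le> c w + 1))"

lemma burning:
  fixes y :: "'n::finite \<Rightarrow> nat"
  assumes Y: "Yc y"
  shows "(\<forall>w\<in>D. CARD('n) \<le> y w + card D) \<Longrightarrow>
    astep\<^sup>*\<^sup>* (\<lambda>w. if w \<in> D then y w + card D - CARD('n) else y w + 1 + card D) y"
proof (induction "CARD('n) - card D" arbitrary: D rule: less_induct)
  case less
  show ?case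
  proof (cases "D = UNIV")
    case True
    then show ?thesis by simp
  next
    case False
    then have ne: "UNIV - D \<noteq> {}" by auto
    then obtain w where w: "w \<in> UNIV - D" "card (UNIV - D) \<le> y w + 1"
      using Y[unfolded Yc_def, rule_format, OF ne] by blast
    have cD: "card (UNIV - D) = CARD('n) - card D" by (simp add: card_Diff_subset)
    have cDw: "card (insert w D) = card D + 1" using w by simp
    have lt: "card D < CARD('n)" using False by (metis card_seteq finite top_greatest not_le_imp_less)
    have topp: "asm_topple w (\<lambda>u. if u \<in> D then y u + card D - CARD('n) else y u + 1 + card D)
        (\<lambda>u. if u \<in> insert w D then y u + card (insert w D) - CARD('n) else y u + 1 + card (insert w D))"
      unfolding asm_topple_def
    proof (intro conjI ext)
      show "CARD('n) \<le> (if w \<in> D then y w + card D - CARD('n) else y w + 1 + card D)"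
        using w cD by auto
      fix u
      show "(if u \<in> insert w D then y u + card (insert w D) - CARD('n) else y u + 1 + card (insert w D)) =
         (if u = w then (if w \<in> D then y w + card D - CARD('n) else y w + 1 + card D) - CARD('n)
          else (if u \<in> D then y u + card D - CARD('n) else y u + 1 + card D) + 1)"
      proof (cases "u = w")
        case True then show ?thesis using w cDw by auto
      next
        case False
        show ?thesis
        proof (cases "u \<in> D")
          case True
          then have "CARD('n) \<le> y u + card D" using less(2) by blast
          then show ?thesis using True False cDw by auto
        next
          case f2: False
          then show ?thesis using False cDw by auto
        qed
      qed
    qed
    have "astep\<^sup>*\<^sup>* (\<lambda>u. if u \<in> insert w D then y u + card (insert w D) - CARD('n) else y u + 1 + card (insert w D)) y"
      apply (rule less(1))
      using lt cDw apply simp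
      using less(2) w cD cDw by fastforce
    then show ?thesis using topp astep_def by (meson converse_rtranclp_into_rtranclp)
  qed
qed

lemma burning_k:
  fixes y :: "'n::finite \<Rightarrow> nat"
  assumes Y: "Yc y"
  shows "astep\<^sup>*\<^sup>* (\<lambda>w. y w + k) y"
proof (induction k)
  case 0 then show ?case by simp
next
  case (Suc k)
  have "astep\<^sup>*\<^sup>* (\<lambda>w. y w + 1) y" using burning[OF Y, of "{}"] by simp
  then have "astep\<^sup>*\<^sup>* (\<lambda>w. y w + 1 + k) (\<lambda>w. y w + k)" by (rule astep_mono)
  moreover have "(\<lambda>w. y w + 1 + k) = (\<lambda>w. y w + Suc k)" by simp
  ultimately show ?case using Suc by (metis (no_types, lifting) rtranclp_trans)
qed

lemma Y_reach:
  fixes y :: "'n::finite \<Rightarrow> nat"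
  assumes mu: "\<forall>i. \<mu> i > 0" and Y: "Yc y" and st: "stable y"
  shows "(asm_trans \<mu>)\<^sup>*\<^sup>* Mx y"
proof -
  have e: "(\<lambda>w. Mx w + y w) = (\<lambda>w. y w + (CARD('n) - 1))"
  proof (rule ext)
    fix w show "Mx w + y w = y w + (CARD('n) - 1)" unfolding Mx_def by simp
  qed
  have "stab (\<lambda>w. y w + (CARD('n) - 1)) = y" by (rule stab_eq[OF burning_k[OF Y] st])
  then have "stab (\<lambda>w. Mx w + y w) = y" using e by simp
  then show ?thesis using reach_stab[OF mu, of y] by simp
qed

lemma Y_DR:
  fixes y :: "'n::finite \<Rightarrow> nat"
  assumes mu: "\<forall>i. \<mu> i > 0" and Y: "Yc y" and st: "stable y"
  shows "DR \<mu> y"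
  unfolding DR_def recurrent_def
proof (intro conjI allI impI st)
  fix d assume "(asm_trans \<mu>)\<^sup>*\<^sup>* y d"
  then have "stable d" using asm_trans_star_stable st by blast
  then have "(asm_trans \<mu>)\<^sup>*\<^sup>* d Mx" using reach_M_asm mu by blast
  then show "(asm_trans \<mu>)\<^sup>*\<^sup>* d y" using Y_reach[OF mu Y st] by (meson rtranclp_trans)
qed

lemma choose2_Suc: "Suc a choose 2 = (a choose 2) + a"
  by (simp add: numeral_2_eq_2)

definition Xs :: "('n::finite \<Rightarrow> nat) \<Rightarrow> bool" where
  "Xs c \<longleftrightarrow> (\<forall>A. card A choose 2 \<le> sum c A)"

lemma ssm_toppleI:
  fixes c :: "'n::finite \<Rightarrow> nat"
  assumes "CARD('n) \<le> c i" "i \<notin> S" "0 < p" "p < 1" "m = card S + (if b then 1 else 0)"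
  shows "ssm_topple p i c (\<lambda>j. if j = i then c i - m else if j \<in> S then c j + 1 else c j)"
  unfolding ssm_topple_def Let_def using assms by (intro conjI exI[of _ b] exI[of _ S]) auto

lemma asm_ssm_topple:
  fixes c :: "'n::finite \<Rightarrow> nat"
  assumes "0 < p" "p < 1" "asm_topple i c c'"
  shows "ssm_topple p i c c'"
proof -
  have ci: "CARD('n) \<le> c i" and c': "c' = (\<lambda>j. if j = i then c i - CARD('n) else c j + 1)"
    using assms by (auto simp: asm_topple_def)
  have cs: "card (UNIV - {i}) + 1 = CARD('n)" using card_ge1[where 'n='n]
    by (simp add: card_Diff_singleton)
  have "ssm_topple p i c (\<lambda>j. if j = i then c i - CARD('n) else if j \<in> UNIV - {i} then c j + 1 else c j)"
    by (rule ssm_toppleI[where c=c and i=i and S="UNIV - {i}" and m="CARD('n)" and b=True and p=p])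
       (use assms ci cs in auto)
  moreover have "(\<lambda>j. if j = i then c i - CARD('n) else if j \<in> UNIV - {i} then c j + 1 else c j) = c'"
    using c' by (auto simp: fun_eq_iff)
  ultimately show ?thesis by simp
qed

lemma asm_ssm_trans:
  assumes "0 < p" "p < 1" "asm_trans \<mu> c d"
  shows "ssm_trans p \<mu> c d"
proof -
  have "(\<lambda>x y. \<exists>i. asm_topple i x y) \<le> (\<lambda>x y. \<exists>i. ssm_topple p i x y)"
    using asm_ssm_topple[OF assms(1,2)] by blast
  then have "asm_stab a b \<Longrightarrow> ssm_stab p a b" for a b
    unfolding asm_stab_def ssm_stab_def using rtranclp_mono by blast
  then show ?thesis using assms(3) unfolding asm_trans_def ssm_trans_def by blast
qed

lemma asm_ssm_star:
  assumes "0 < p" "p < 1" "(asm_trans \<mu>)\<^sup>*\<^sup>* c d"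
  shows "(ssm_trans p \<mu>)\<^sup>*\<^sup>* c d"
  using assms(3) by (induction rule: rtranclp_induct)
    (auto intro: rtranclp.rtrancl_into_rtrancl asm_ssm_trans[OF assms(1,2)])

lemma reach_M_ssm:
  assumes "0 < p" "p < 1" "\<forall>i. \<mu> i > 0" "stable c"
  shows "(ssm_trans p \<mu>)\<^sup>*\<^sup>* c Mx"
  using asm_ssm_star[OF assms(1,2) reach_M_asm[OF assms(3,4)]] .

lemma Xs_add_grain: "Xs c \<Longrightarrow> Xs (add_grain i c)"
  unfolding Xs_def
proof (intro allI)
  fix A assume h: "\<forall>A. card A choose 2 \<le> sum c A"
  have "sum c A \<le> sum (add_grain i c) A"
    by (cases "finite A") (auto intro!: sum_mono simp: add_grain_def)
  then show "card A choose 2 \<le> sum (add_grain i c) A" using h by (meson le_trans)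
qed

lemma Xs_ssm_topple:
  fixes c :: "'n::finite \<Rightarrow> nat"
  assumes X: "Xs c" and t: "ssm_topple p i c c'"
  shows "Xs c'"
proof -
  obtain b S where ci: "CARD('n) \<le> c i" and iS: "i \<notin> S" and
    c': "c' = (\<lambda>j. if j = i then c i - (card S + (if b then 1 else 0))
                   else if j \<in> S then c j + 1 else c j)"
    using t unfolding ssm_topple_def Let_def by blast
  define m where "m = card S + (if b then 1 else 0)"
  have cS: "card S \<le> CARD('n) - 1"
  proof -
    have "S \<subseteq> UNIV - {i}" using iS by auto
    then have "card S \<le> card (UNIV - {i})" by (intro card_mono) auto
    moreover have "card (UNIV - {i}) = CARD('n) - 1" by (simp add: card_Diff_singleton)
    ultimately show ?thesis by simp
  qed
  have N1: "1 \<le> CARD('n)" by (rule card_ge1)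
  have mN: "m \<le> CARD('n)" using cS N1 unfolding m_def by (cases b) arith+
  show ?thesis unfolding Xs_def
  proof
    fix A :: "'n set"
    show "card A choose 2 \<le> sum c' A"
    proof (cases "i \<in> A")
      case False
      have "sum c A \<le> sum c' A" by (rule sum_mono) (use False in \<open>auto simp: c'\<close>)
      then show ?thesis using X unfolding Xs_def by (meson le_trans)
    next
      case True
      have fA: "finite A" by simp
      have s1: "sum c' A = c' i + sum c' (A - {i})" using True by (simp add: sum.remove)
      have "sum c' (A - {i}) = sum (\<lambda>j. c j + (if j \<in> S then 1 else 0)) (A - {i})"
        by (rule sum.cong) (auto simp: c')
      also have "\<dots> = sum c (A - {i}) + card ((A - {i}) \<inter> S)"
        by (simp add: sum.distrib sum_ind_card)
      finally have s2: "sum c' (A - {i}) = sum c (A - {i}) + card ((A - {i}) \<inter> S)" .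
      have ci': "c' i = c i - m" by (simp add: c' m_def)
      have cA: "card A = Suc (card (A - {i}))" using card_Suc_Diff1[OF fA True] by simp
      have XA: "card (A - {i}) choose 2 \<le> sum c (A - {i})" using X unfolding Xs_def by blast
      have Sdec: "card S = card ((A - {i}) \<inter> S) + card (S - A)"
      proof -
        have "S = ((A - {i}) \<inter> S) \<union> (S - A)" using iS by auto
        moreover have "((A - {i}) \<inter> S) \<inter> (S - A) = {}" by auto
        ultimately show ?thesis by (metis card_Un_disjoint finite)
      qed
      have "card (S - A) \<le> card (UNIV - A)" by (rule card_mono) auto
      moreover have "card A \<le> CARD('n)" by (rule card_mono) auto
      ultimately have SA: "card (S - A) + card A \<le> CARD('n)" by (simp add: card_Diff_subset)
      have "card A - 1 \<le> c i - m + card ((A - {i}) \<inter> S)"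
        using SA Sdec ci mN cA unfolding m_def by (cases b) auto
      then show ?thesis using s1 s2 ci' XA cA choose2_Suc by simp
    qed
  qed
qed

lemma Xs_ssm_stab: "Xs c \<Longrightarrow> (\<lambda>x y. \<exists>i. ssm_topple p i x y)\<^sup>*\<^sup>* c d \<Longrightarrow> Xs d"
proof -
  assume "Xs c" "(\<lambda>x y. \<exists>i. ssm_topple p i x y)\<^sup>*\<^sup>* c d"
  then show "Xs d"
    by (induction rule: rtranclp_induct[OF \<open>(\<lambda>x y. \<exists>i. ssm_topple p i x y)\<^sup>*\<^sup>* c d\<close>])
      (auto intro: Xs_ssm_topple)
qed

lemma Xs_ssm_trans_star: "(ssm_trans p \<mu>)\<^sup>*\<^sup>* c d \<Longrightarrow> Xs c \<Longrightarrow> Xs d"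
proof (induction rule: rtranclp_induct)
  case base then show ?case .
next
  case (step y z)
  then show ?case unfolding ssm_trans_def ssm_stab_def
    using Xs_add_grain Xs_ssm_stab by blast
qed

lemma Xs_Mx: "Xs (Mx :: 'n::finite \<Rightarrow> nat)"
  unfolding Xs_def
proof
  fix A :: "'n set"
  have "card A choose 2 \<le> card A * (card A - 1)" by (simp add: choose_two)
  also have "\<dots> \<le> card A * (CARD('n) - 1)"
    by (intro mult_le_mono2 diff_le_mono card_mono) auto
  also have "\<dots> = sum Mx A" by (simp add: Mx_def)
  finally show "card A choose 2 \<le> sum Mx A" .
qed

lemma multi_topple:
  fixes c :: "'n::finite \<Rightarrow> nat"
  assumes p: "0 < p" "p < 1"
  shows "finite K \<Longrightarrow> (\<forall>w\<in>K. c w = CARD('n)) \<Longrightarrow>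
    (\<lambda>x y. \<exists>i. ssm_topple p i x y)\<^sup>*\<^sup>* c (\<lambda>w. if w \<in> K then CARD('n) - 1 else c w)"
proof (induction K rule: finite_induct)
  case empty then show ?case by simp
next
  case (insert k K)
  define c1 where "c1 = (\<lambda>w. if w \<in> K then CARD('n) - 1 else c w)"
  have IH: "(\<lambda>x y. \<exists>i. ssm_topple p i x y)\<^sup>*\<^sup>* c c1" using insert unfolding c1_def by auto
  have ck: "c1 k = CARD('n)"
  proof -
    have "k \<notin> K" by (rule insert.hyps(2))
    moreover have "c k = CARD('n)" using insert.prems by simp
    ultimately show ?thesis unfolding c1_def by simp
  qed
  have t: "ssm_topple p k c1 (\<lambda>j. if j = k then c1 k - 1 else if j \<in> {} then c1 j + 1 else c1 j)"
    by (rule ssm_toppleI[where c=c1 and i=k and S="{}" and m=1 and b=True and p=p])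
       (use p ck in auto)
  have "(\<lambda>j. if j = k then c1 k - 1 else if j \<in> {} then c1 j + 1 else c1 j) =
        (\<lambda>w. if w \<in> insert k K then CARD('n) - 1 else c w)"
    using ck insert.hyps(2) by (auto simp: fun_eq_iff c1_def)
  with t have "ssm_topple p k c1 (\<lambda>w. if w \<in> insert k K then CARD('n) - 1 else c w)" by simp
  then show ?case by (intro rtranclp.rtrancl_into_rtrancl[OF IH]) blast
qed

lemma topk:
  fixes f :: "'a \<Rightarrow> nat"
  assumes fin: "finite W"
  shows "k \<le> card W \<Longrightarrow> \<exists>T\<subseteq>W. card T = k \<and> (\<forall>g\<in>T. \<forall>e\<in>W - T. f e \<le> f g)"
proof (induction k)
  case 0 then show ?case by (intro exI[of _ "{}"]) auto
next
  case (Suc k)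
  then obtain T where T: "T \<subseteq> W" "card T = k" "\<forall>g\<in>T. \<forall>e\<in>W - T. f e \<le> f g" by auto
  have finT: "finite T" using T(1) fin finite_subset by blast
  have ne: "W - T \<noteq> {}"
  proof
    assume "W - T = {}"
    then have "W \<subseteq> T" by blast
    then have "card W \<le> card T" using finT card_mono by blast
    then show False using T(2) Suc(2) by simp
  qed
  have finD: "finite (W - T)" using fin by simp
  define mx where "mx = Max (f ` (W - T))"
  have "mx \<in> f ` (W - T)" unfolding mx_def using finD ne by simp
  then obtain g where g: "g \<in> W - T" "f g = mx" by auto
  have ge: "\<forall>e\<in>W - T. f e \<le> f g" using g finD unfolding mx_def by simp
  show ?case
  proof (intro exI[of _ "insert g T"] conjI)
    show "insert g T \<subseteq> W" using g T by auto
    show "card (insert g T) = Suc k" using g T finT by simp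
    show "\<forall>ga\<in>insert g T. \<forall>e\<in>W - insert g T. f e \<le> f ga" using T(3) ge by auto
  qed
qed

lemma slack:
  fixes x :: "'n::finite \<Rightarrow> nat"
  assumes X: "Xs x" and T: "T \<subseteq> UNIV - {j}" "card T + x j = CARD('n) - 1"
    and top: "\<forall>g\<in>T. \<forall>e\<in>(UNIV - {j}) - T. x e \<le> x g"
  shows "j \<notin> A \<Longrightarrow> (card A choose 2) + card (A \<inter> T) \<le> sum x A"
proof (induction "card (A \<inter> T) + card ((UNIV - {j} - T) - A)" arbitrary: A rule: less_induct)
  case less
  define B where "B = UNIV - {j} - T"
  show ?case
  proof (cases "B \<subseteq> A")
    case True
    have "card B = card (UNIV - {j}) - card T" unfolding B_def
      using T(1) by (simp add: card_Diff_subset)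
    also have "card (UNIV - {j}) = CARD('n) - 1" by (simp add: card_Diff_singleton)
    finally have cB: "card B = x j" using T(2) by simp
    have Adec: "A = (A \<inter> T) \<union> B" using True less(2) T(1) unfolding B_def by auto
    have "(A \<inter> T) \<inter> B = {}" unfolding B_def by auto
    then have cA: "card A = card (A \<inter> T) + x j" using Adec cB
      by (metis card_Un_disjoint finite)
    have "card (insert j A) choose 2 \<le> sum x (insert j A)" using X unfolding Xs_def by blast
    then have "Suc (card A) choose 2 \<le> x j + sum x A" using less(2) by simp
    then have "(card A choose 2) + card A \<le> x j + sum x A" unfolding choose2_Suc .
    then show ?thesis using cA by linarith
  next
    case False
    then obtain e where e: "e \<in> B" "e \<notin> A" by blast
    have ej: "e \<noteq> j" "e \<notin> T" using e unfolding B_def by auto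
    show ?thesis
    proof (cases "x e \<le> card A")
      case True
      have i1: "insert e A \<inter> T = A \<inter> T" using ej by auto
      have i2: "B - insert e A = (B - A) - {e}" by auto
      have "card ((B - A) - {e}) < card (B - A)" using e by (intro card_Diff1_less) auto
      then have m: "card (insert e A \<inter> T) + card (B - insert e A) < card (A \<inter> T) + card (B - A)"
        using i1 i2 by simp
      have "(card (insert e A) choose 2) + card (insert e A \<inter> T) \<le> sum x (insert e A)"
        using less(1)[OF m[unfolded B_def]] less(2) ej by auto
      then have "(Suc (card A) choose 2) + card (A \<inter> T) \<le> x e + sum x A" using e i1 by simp
      then have "(card A choose 2) + card A + card (A \<inter> T) \<le> x e + sum x A" unfolding choose2_Suc .
      then show ?thesis using True by linarith
    next
      case False
      show ?thesis
      proof (cases "A \<inter> T = {}")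
        case True then show ?thesis using X unfolding Xs_def by simp
      next
        case False
        then obtain g where g: "g \<in> A" "g \<in> T" by blast
        have xg: "x e \<le> x g" using top g e ej unfolding B_def by blast
        have gB: "g \<notin> B" using g unfolding B_def by auto
        have i1: "(A - {g}) \<inter> T = (A \<inter> T) - {g}" by auto
        have "card ((A \<inter> T) - {g}) < card (A \<inter> T)" using g by (intro card_Diff1_less) auto
        moreover have "B - (A - {g}) = B - A" using gB by auto
        ultimately have m: "card ((A - {g}) \<inter> T) + card (B - (A - {g})) < card (A \<inter> T) + card (B - A)"
          using i1 by simp
        have IH: "(card (A - {g}) choose 2) + card ((A - {g}) \<inter> T) \<le> sum x (A - {g})"
          using less(1)[OF m[unfolded B_def]] less(2) by auto
        have cA: "card A = Suc (card (A - {g}))" using card_Suc_Diff1[of A g] g by simp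
        have cAT: "card (A \<inter> T) = Suc (card ((A - {g}) \<inter> T))"
          using card_Suc_Diff1[of "A \<inter> T" g] g i1 by simp
        have sA: "sum x A = x g + sum x (A - {g})" using g by (simp add: sum.remove)
        have "card A < x e" using \<open>\<not> x e \<le> card A\<close> by simp
        have "card A choose 2 = (card (A - {g}) choose 2) + card (A - {g})"
          unfolding cA by (rule choose2_Suc)
        then show ?thesis using \<open>card A < x e\<close> IH cA cAT sA xg by linarith
      qed
    qed
  qed
qed

definition sumsq :: "('n::finite \<Rightarrow> nat) \<Rightarrow> nat" where
  "sumsq c = (\<Sum>w\<in>UNIV. c w ^ 2)"

lemma pred_exists:
  fixes x :: "'n::finite \<Rightarrow> nat"
  assumes p: "0 < p" "p < 1" and mu: "\<forall>i. \<mu> i > 0"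
    and st: "stable x" and X: "Xs x" and ne: "x \<noteq> Mx"
  shows "\<exists>z. stable z \<and> Xs z \<and> sumsq x < sumsq z \<and> ssm_trans p \<mu> z x"
proof -
  define N where "N = CARD('n)"
  have N1: "1 \<le> N" unfolding N_def by (rule card_ge1)
  define L where "L = {w. x w < N - 1}"
  have Lne: "L \<noteq> {}"
  proof
    assume "L = {}"
    then have "\<forall>w. x w = N - 1" using st unfolding L_def stable_def N_def
      by (metis empty_iff le_neq_implies_less mem_Collect_eq)
    then show False using ne unfolding Mx_def N_def by auto
  qed
  define m where "m = Max (x ` L)"
  have "m \<in> x ` L" unfolding m_def using Lne by simp
  then obtain j where j: "j \<in> L" "x j = m" by auto
  have jmax: "\<And>w. w \<in> L \<Longrightarrow> x w \<le> m" unfolding m_def by simp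
  have mlt: "m < N - 1" using j unfolding L_def by simp
  define d where "d = N - 1 - m"
  have d1: "1 \<le> d" using mlt unfolding d_def by simp
  have cW: "card (UNIV - {j}) = N - 1" unfolding N_def by (simp add: card_Diff_singleton)
  obtain T where T: "T \<subseteq> UNIV - {j}" "card T = d" "\<forall>g\<in>T. \<forall>e\<in>(UNIV - {j}) - T. x e \<le> x g"
  proof -
    have "d \<le> card (UNIV - {j})" using cW unfolding d_def by simp
    then show ?thesis using that topk[of "UNIV - {j}" d x] by auto
  qed
  have jT: "j \<notin> T" using T(1) by auto
  have Tx: "card T + x j = CARD('n) - 1" using T(2) j mlt unfolding d_def N_def by simp
  have sl: "\<And>A. j \<notin> A \<Longrightarrow> (card A choose 2) + card (A \<inter> T) \<le> sum x A"
    using slack[OF X T(1) Tx T(3)] by blast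
  have T1: "1 \<le> x g" if "g \<in> T" for g
  proof -
    have "g \<noteq> j" using that jT by auto
    then have "(card {g} choose 2) + card ({g} \<inter> T) \<le> sum x {g}" using sl[of "{g}"] by auto
    then show ?thesis using that by simp
  qed
  define z where "z = (\<lambda>w. if w = j then N - 1 else if w \<in> T \<and> x w \<noteq> N - 1 then x w - 1 else x w)"
  have zj: "z j = N - 1" unfolding z_def by simp
  have zst: "stable z" unfolding stable_def
  proof
    fix w
    have "x w \<le> CARD('n) - 1" using st unfolding stable_def by blast
    moreover have "z w \<le> x w \<or> z w = N - 1" unfolding z_def by auto
    ultimately show "z w \<le> CARD('n) - 1" unfolding N_def by auto
  qed
  have pw: "x w \<le> z w + (if w \<in> T then 1 else 0)" if "w \<noteq> j" for w
    using that unfolding z_def by auto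
  have sumpw: "sum x A \<le> sum z A + card (A \<inter> T)" if "j \<notin> A" for A
  proof -
    have "sum x A \<le> sum (\<lambda>w. z w + (if w \<in> T then 1 else 0)) A"
      by (rule sum_mono) (metis pw that)
    also have "\<dots> = sum z A + card (A \<inter> T)" by (simp add: sum.distrib sum_ind_card)
    finally show ?thesis .
  qed
  have zX: "Xs z"
    unfolding Xs_def
  proof
    fix A :: "'n set"
    show "card A choose 2 \<le> sum z A"
    proof (cases "j \<in> A")
      case False then show ?thesis using sl[OF False] sumpw[OF False] by linarith
    next
      case True
      have a1: "card A choose 2 \<le> sum x A" using X unfolding Xs_def by blast
      have a2: "sum x A = x j + sum x (A - {j})" using True by (simp add: sum.remove)
      have a3: "sum x (A - {j}) \<le> sum z (A - {j}) + card ((A - {j}) \<inter> T)" using sumpw by blast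
      have a4: "card ((A - {j}) \<inter> T) \<le> d" using T(2) card_mono[of T "(A - {j}) \<inter> T"] by auto
      have a5: "sum z A = z j + sum z (A - {j})" using True by (simp add: sum.remove)
      have a6: "x j + d = N - 1" using j mlt unfolding d_def by simp
      show ?thesis using a1 a2 a3 a4 a5 a6 zj by linarith
    qed
  qed
  have sq: "sumsq x < sumsq z"
  proof -
    have pw2: "x w ^ 2 \<le> z w ^ 2 + (if w \<in> T then 2 * m else 0)" if "w \<noteq> j" for w
    proof (cases "w \<in> T \<and> x w \<noteq> N - 1")
      case True
      then have "w \<in> L" using st unfolding L_def stable_def N_def by (simp add: le_neq_implies_less)
      then have xm: "x w \<le> m" using jmax by blast
      have x1: "1 \<le> x w" using T1 True by blast
      have zw: "z w = x w - 1" using True that unfolding z_def by simp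
      define a where "a = z w"
      have xa: "x w = a + 1" using zw x1 unfolding a_def by simp
      have "x w ^ 2 = a ^ 2 + 2 * a + 1" unfolding xa by (simp add: power2_eq_square algebra_simps)
      moreover have "a + 1 \<le> m" using xm xa by simp
      ultimately show ?thesis using True unfolding a_def by simp
    next
      case False
      then have "z w = x w" using that unfolding z_def by auto
      then show ?thesis by simp
    qed
    have "sum (\<lambda>w. x w ^ 2) (UNIV - {j}) \<le> sum (\<lambda>w. z w ^ 2 + (if w \<in> T then 2 * m else 0)) (UNIV - {j})"
      by (rule sum_mono) (use pw2 in blast)
    also have "\<dots> = sum (\<lambda>w. z w ^ 2) (UNIV - {j}) + 2 * m * card ((UNIV - {j}) \<inter> T)"
    proof -
      have "sum (\<lambda>w. if w \<in> T then 2 * m else 0) (UNIV - {j}) = sum (\<lambda>w. 2 * m * (if w \<in> T then 1 else 0)) (UNIV - {j})"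
        by (rule sum.cong) auto
      also have "\<dots> = 2 * m * card ((UNIV - {j}) \<inter> T)" by (simp add: sum_distrib_left[symmetric] sum_ind_card)
      finally show ?thesis by (simp add: sum.distrib)
    qed
    also have "(UNIV - {j}) \<inter> T = T" using T(1) by auto
    finally have r: "sum (\<lambda>w. x w ^ 2) (UNIV - {j}) \<le> sum (\<lambda>w. z w ^ 2) (UNIV - {j}) + 2 * m * d"
      using T(2) by simp
    have sx: "sumsq x = m ^ 2 + sum (\<lambda>w. x w ^ 2) (UNIV - {j})"
      unfolding sumsq_def using j(2) by (simp add: sum.remove[of UNIV j])
    have sz: "sumsq z = (m + d) ^ 2 + sum (\<lambda>w. z w ^ 2) (UNIV - {j})"
    proof -
      have "z j = m + d" using zj mlt unfolding d_def by simp
      then show ?thesis unfolding sumsq_def by (simp add: sum.remove[of UNIV j])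
    qed
    have e: "(m + d) ^ 2 = m ^ 2 + 2 * m * d + d ^ 2" by (simp add: power2_sum)
    have "1 \<le> d ^ 2" using d1 by simp
    then show ?thesis using sx sz e r by linarith
  qed
  have tr: "ssm_trans p \<mu> z x"
    unfolding ssm_trans_def ssm_stab_def
  proof (intro conjI exI[of _ j] zst st)
    show "0 < \<mu> j" using mu by blast
    define c0 where "c0 = add_grain j z"
    have c0j: "c0 j = CARD('n)" unfolding c0_def add_grain_def using zj N1 unfolding N_def by simp
    define c1 where "c1 = (\<lambda>w. if w = j then c0 j - (card T + 1) else if w \<in> T then c0 w + 1 else c0 w)"
    have t1: "ssm_topple p j c0 c1" unfolding c1_def
      by (rule ssm_toppleI[where c=c0 and i=j and S=T and m="card T + 1" and b=True and p=p])
         (use p c0j jT in auto)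
    define K where "K = {w \<in> T. x w = N - 1}"
    have K: "\<forall>w\<in>K. c1 w = CARD('n)"
    proof
      fix w assume "w \<in> K"
      then have "w \<in> T" "x w = N - 1" "w \<noteq> j" unfolding K_def using jT by auto
      then show "c1 w = CARD('n)" unfolding c1_def c0_def add_grain_def z_def N_def using N1 N_def by simp
    qed
    have mt: "(\<lambda>x y. \<exists>i. ssm_topple p i x y)\<^sup>*\<^sup>* c1 (\<lambda>w. if w \<in> K then CARD('n) - 1 else c1 w)"
      by (rule multi_topple[OF p]) (use K in auto)
    have eqx: "(\<lambda>w. if w \<in> K then CARD('n) - 1 else c1 w) = x"
    proof
      fix w
      show "(if w \<in> K then CARD('n) - 1 else c1 w) = x w"
      proof (cases "w = j")
        case True
        then have "w \<notin> K" using jT unfolding K_def by auto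
        moreover have "c1 j = m" unfolding c1_def using c0j T(2) mlt unfolding d_def N_def by simp
        ultimately show ?thesis using True j by simp
      next
        case wj: False
        show ?thesis
        proof (cases "w \<in> K")
          case True then show ?thesis unfolding K_def N_def by simp
        next
          case False
          show ?thesis
          proof (cases "w \<in> T")
            case True
            then have "x w \<noteq> N - 1" using False unfolding K_def by simp
            then show ?thesis using True False wj T1[OF True]
              unfolding c1_def c0_def add_grain_def z_def by simp
          next
            case f2: False
            then show ?thesis using False wj unfolding c1_def c0_def add_grain_def z_def by simp
          qed
        qed
      qed
    qed
    show "(\<lambda>x y. \<exists>i. ssm_topple p i x y)\<^sup>*\<^sup>* (add_grain j z) x"
      using t1 mt eqx unfolding c0_def
      by (metis (mono_tags, lifting) converse_rtranclp_into_rtranclp)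
  qed
  show ?thesis using zst zX sq tr by blast
qed

lemma sumsq_bound:
  fixes z :: "'n::finite \<Rightarrow> nat"
  assumes "stable z"
  shows "sumsq z \<le> CARD('n) * (CARD('n) - 1) ^ 2"
proof -
  have "sumsq z \<le> of_nat (card (UNIV :: 'n set)) * (CARD('n) - 1) ^ 2"
    unfolding sumsq_def
    by (rule sum_bounded_above) (use assms in \<open>auto simp: stable_def intro: power_mono\<close>)
  then show ?thesis by simp
qed

lemma X_reach:
  fixes x :: "'n::finite \<Rightarrow> nat"
  assumes p: "0 < p" "p < 1" and mu: "\<forall>i. \<mu> i > 0"
  shows "stable x \<Longrightarrow> Xs x \<Longrightarrow> (ssm_trans p \<mu>)\<^sup>*\<^sup>* Mx x"
proof (induction "CARD('n) * (CARD('n) - 1) ^ 2 - sumsq x" arbitrary: x rule: less_induct)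
  case less
  show ?case
  proof (cases "x = Mx")
    case True then show ?thesis by simp
  next
    case False
    obtain z where z: "stable z" "Xs z" "sumsq x < sumsq z" "ssm_trans p \<mu> z x"
      using pred_exists[OF p mu less(2) less(3) False] by blast
    have "sumsq z \<le> CARD('n) * (CARD('n) - 1) ^ 2" by (rule sumsq_bound[OF z(1)])
    then have "CARD('n) * (CARD('n) - 1) ^ 2 - sumsq z < CARD('n) * (CARD('n) - 1) ^ 2 - sumsq x"
      using z(3) by linarith
    then have "(ssm_trans p \<mu>)\<^sup>*\<^sup>* Mx z" using less(1) z(1,2) by blast
    then show ?thesis using z(4) by (meson rtranclp.rtrancl_into_rtrancl)
  qed
qed

lemma ssm_trans_stable: "ssm_trans p \<mu> c d \<Longrightarrow> stable d"
  by (auto simp: ssm_trans_def ssm_stab_def)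

lemma ssm_trans_star_stable: "(ssm_trans p \<mu>)\<^sup>*\<^sup>* c d \<Longrightarrow> stable c \<Longrightarrow> stable d"
  by (induction rule: rtranclp_induct) (auto dest: ssm_trans_stable)

lemma SR_iff:
  fixes c :: "'n::finite \<Rightarrow> nat"
  assumes p: "0 < p" "p < 1" and mu: "\<forall>i. \<mu> i > 0"
  shows "SR p \<mu> c \<longleftrightarrow> stable c \<and> Xs c"
proof
  assume "SR p \<mu> c"
  then have st: "stable c" and r: "recurrent (ssm_trans p \<mu>) c" unfolding SR_def by auto
  have "(ssm_trans p \<mu>)\<^sup>*\<^sup>* c Mx" using reach_M_ssm[OF p mu st] .
  then have "(ssm_trans p \<mu>)\<^sup>*\<^sup>* Mx c" using r unfolding recurrent_def by blast
  then have "Xs c" using Xs_ssm_trans_star Xs_Mx by blast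
  then show "stable c \<and> Xs c" using st by blast
next
  assume h: "stable c \<and> Xs c"
  show "SR p \<mu> c" unfolding SR_def recurrent_def
  proof (intro conjI allI impI)
    show "stable c" using h by blast
    fix d assume "(ssm_trans p \<mu>)\<^sup>*\<^sup>* c d"
    then have "stable d" using ssm_trans_star_stable h by blast
    then have "(ssm_trans p \<mu>)\<^sup>*\<^sup>* d Mx" using reach_M_ssm[OF p mu] by blast
    moreover have "(ssm_trans p \<mu>)\<^sup>*\<^sup>* Mx c" using X_reach[OF p mu] h by blast
    ultimately show "(ssm_trans p \<mu>)\<^sup>*\<^sup>* d c" by (rule rtranclp_trans)
  qed
qed

lemma DR_Xs:
  fixes c :: "'n::finite \<Rightarrow> nat" and p :: real
  assumes p: "0 < p" "p < 1" and mu: "\<forall>i. \<mu> i > 0" and dr: "DR \<mu> c"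
  shows "stable c \<and> Xs c"
proof -
  have st: "stable c" and r: "recurrent (asm_trans \<mu>) c" using dr unfolding DR_def by auto
  have "(asm_trans \<mu>)\<^sup>*\<^sup>* c Mx" using reach_M_asm[OF mu st] .
  then have "(asm_trans \<mu>)\<^sup>*\<^sup>* Mx c" using r unfolding recurrent_def by blast
  then have "(ssm_trans p \<mu>)\<^sup>*\<^sup>* Mx c" using asm_ssm_star[OF p] by blast
  then have "Xs c" using Xs_ssm_trans_star Xs_Mx by blast
  then show ?thesis using st by blast
qed

lemma spread:
  fixes c :: "'n::finite \<Rightarrow> nat"
  assumes st: "stable c" and X: "Xs c" and nY: "\<not> Yc c"
  shows "\<exists>u v. u \<noteq> v \<and> c u \<le> c v \<and> 1 \<le> c u \<and> c v + 1 \<le> CARD('n) - 1 \<and>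
     (\<forall>B. u \<in> B \<and> v \<notin> B \<longrightarrow> (card B choose 2) < sum c B)"
proof -
  obtain A where Ane: "A \<noteq> {}" and Ab: "\<forall>w\<in>A. c w + 1 < card A"
    using nY unfolding Yc_def by (auto simp: not_le)
  have finA: "finite A" by simp
  define mv where "mv = Max (c ` A)"
  have "mv \<in> c ` A" unfolding mv_def using Ane by simp
  then obtain v where v: "v \<in> A" "c v = mv" by auto
  have vmax: "\<And>w. w \<in> A \<Longrightarrow> c w \<le> c v" using v unfolding mv_def by simp
  have "c v + 1 < card A" using Ab v(1) by blast
  then have cA2: "2 \<le> card A" by linarith
  have "card (A - {v}) = card A - 1" using v(1) by simp
  then have Av: "A - {v} \<noteq> {}"
  proof -
    assume h: "card (A - {v}) = card A - 1"
    show ?thesis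
    proof
      assume "A - {v} = {}"
      then have "card (A - {v}) = 0" by simp
      then show False using h cA2 by linarith
    qed
  qed
  define mu where "mu = Max (c ` (A - {v}))"
  have "mu \<in> c ` (A - {v})" unfolding mu_def using Av by simp
  then obtain u where u: "u \<in> A" "u \<noteq> v" "c u = mu" by auto
  have umax: "\<And>w. w \<in> A - {v} \<Longrightarrow> c w \<le> c u" using u unfolding mu_def by simp
  have cAN: "card A \<le> CARD('n)" by (rule card_mono) auto
  have slack: "(card B choose 2) < sum c B" if B: "u \<in> B" "v \<notin> B" for B
  proof (rule ccontr)
    assume "\<not> (card B choose 2) < sum c B"
    then have tight: "sum c B \<le> card B choose 2" by simp
    define t where "t = card B"
    have finB: "finite B" by simp
    have i: "c u \<le> t - 1"
    proof -
      have "card (B - {u}) choose 2 \<le> sum c (B - {u})" using X unfolding Xs_def by blast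
      moreover have "sum c B = c u + sum c (B - {u})" using B by (simp add: sum.remove)
      moreover have cBu: "card B = Suc (card (B - {u}))" using card_Suc_Diff1[OF finB B(1)] by simp
      moreover have "card B choose 2 = (card (B - {u}) choose 2) + card (B - {u})"
        unfolding cBu by (rule choose2_Suc)
      ultimately show ?thesis using tight unfolding t_def by linarith
    qed
    have out: "t \<le> c w" if "w \<notin> B" for w
    proof -
      have "card (insert w B) choose 2 \<le> sum c (insert w B)" using X unfolding Xs_def by blast
      then have "Suc (card B) choose 2 \<le> c w + sum c B" using that by simp
      then have "(card B choose 2) + card B \<le> c w + sum c B" unfolding choose2_Suc .
      then show ?thesis using tight unfolding t_def by linarith
    qed
    have ii: "t \<le> c v" using out B(2) by blast
    have iii: "A - {v} \<subseteq> B"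
    proof
      fix w assume w: "w \<in> A - {v}"
      have cw: "c w \<le> t - 1" using umax[OF w] i by linarith
      have "card B > 0" using B(1) finB card_gt_0_iff by blast
      then have t1: "t \<ge> 1" unfolding t_def by simp
      show "w \<in> B"
      proof (rule ccontr)
        assume "w \<notin> B"
        then have "t \<le> c w" using out by blast
        then show False using cw t1 by linarith
      qed
    qed
    have "card (A - {v}) \<le> t" unfolding t_def using iii card_mono finB by blast
    then have "card A \<le> t + 1" using v(1) by simp
    moreover have "c v + 1 < card A" using Ab v(1) by blast
    ultimately show False using ii by linarith
  qed
  have u1: "1 \<le> c u"
  proof -
    have "(card {u} choose 2) < sum c {u}" using slack[of "{u}"] u(2) by auto
    then show ?thesis by simp
  qed
  have "c v + 1 < card A" using Ab v(1) by blast
  then have vN: "c v + 1 \<le> CARD('n) - 1" using cAN by linarith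
  show ?thesis using u(2) vmax[OF u(1)] u1 vN slack by blast
qed

lemma sum_move:
  fixes c c' :: "'a \<Rightarrow> nat"
  assumes "finite B" "\<And>w. c' w + (if w = u then 1 else 0) = c w + (if w = v then 1 else 0)"
  shows "sum c' B + (if u \<in> B then 1 else 0) = sum c B + (if v \<in> B then 1 else 0)"
proof -
  have "sum (\<lambda>w. c' w + (if w = u then 1 else 0)) B = sum (\<lambda>w. c w + (if w = v then 1 else 0)) B"
    using assms(2) by simp
  then show ?thesis using assms(1) by (simp add: sum.distrib sum.delta)
qed

definition swp :: "'a \<Rightarrow> 'a \<Rightarrow> 'a \<Rightarrow> 'a" where
  "swp u v w = (if w = u then v else if w = v then u else w)"

lemma swp_bij: "bij (swp u v)"
proof -
  have "swp u v (swp u v w) = w" for w by (auto simp: swp_def)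
  then show ?thesis by (metis bijI' )
qed

lemma Xs_perm:
  fixes c :: "'n::finite \<Rightarrow> nat" and s :: "'n \<Rightarrow> 'n"
  assumes X: "Xs c" and b: "bij s"
  shows "Xs (c \<circ> s)"
  unfolding Xs_def
proof
  fix A :: "'n set"
  have inj: "inj_on s A" using b bij_is_inj inj_on_subset by blast
  have "sum (c \<circ> s) A = sum c (s ` A)" using inj by (simp add: sum.reindex)
  moreover have "card (s ` A) = card A" using inj by (simp add: card_image)
  moreover have "card (s ` A) choose 2 \<le> sum c (s ` A)" using X unfolding Xs_def by blast
  ultimately show "card A choose 2 \<le> sum (c \<circ> s) A" by simp
qed

lemma sumsq_perm:
  fixes c :: "'n::finite \<Rightarrow> nat" and s :: "'n \<Rightarrow> 'n"
  assumes b: "bij s"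
  shows "sumsq (c \<circ> s) = sumsq c"
proof -
  have "sumsq (c \<circ> s) = (\<Sum>w\<in>UNIV. (\<lambda>w. c w ^ 2) (s w))" unfolding sumsq_def by simp
  also have "\<dots> = (\<Sum>w\<in>s ` UNIV. c w ^ 2)"
    using b by (simp add: sum.reindex bij_is_inj)
  also have "s ` UNIV = UNIV" using b by (simp add: bij_is_surj)
  finally show ?thesis unfolding sumsq_def by simp
qed

lemma sum_perm:
  fixes c :: "'n::finite \<Rightarrow> nat" and s :: "'n \<Rightarrow> 'n"
  assumes b: "bij s"
  shows "sum (c \<circ> s) UNIV = sum c UNIV"
proof -
  have "sum (c \<circ> s) UNIV = sum c (s ` UNIV)" using b by (simp add: sum.reindex bij_is_inj)
  also have "s ` UNIV = UNIV" using b by (simp add: bij_is_surj)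
  finally show ?thesis .
qed

lemma comb_u:
  fixes a b D :: real
  assumes "0 < D" "D = b - a + 1"
  shows "a = D / (D + 1) * (a - 1) + (1 - D / (D + 1)) * (b + 1)"
proof -
  have n: "D + 1 \<noteq> 0" using assms by simp
  have e1: "D * (a - 1) + (b + 1) = a * (D + 1)" using assms(2) by (simp add: algebra_simps)
  define q where "q = 1 / (D + 1)"
  have q1: "D * q + q = 1"
  proof -
    have "D * q + q = (D + 1) * q" by (simp add: algebra_simps)
    also have "\<dots> = 1" unfolding q_def using n by simp
    finally show ?thesis .
  qed
  have dq: "D / (D + 1) = D * q" unfolding q_def by simp
  have q2: "1 - D * q = q" using q1 by linarith
  have "D / (D + 1) * (a - 1) + (1 - D / (D + 1)) * (b + 1) = D * q * (a - 1) + q * (b + 1)"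
    unfolding dq q2 by simp
  also have "\<dots> = q * (D * (a - 1) + (b + 1))" by (simp add: algebra_simps)
  also have "\<dots> = a * (D * q + q)" unfolding e1 by (simp add: algebra_simps)
  also have "\<dots> = a" unfolding q1 by simp
  finally show ?thesis by simp
qed

lemma comb_v:
  fixes a b D :: real
  assumes "0 < D" "D = b - a + 1"
  shows "b = D / (D + 1) * (b + 1) + (1 - D / (D + 1)) * (a - 1)"
proof -
  have n: "D + 1 \<noteq> 0" using assms by simp
  have e1: "D * (b + 1) + (a - 1) = b * (D + 1)" using assms(2) by (simp add: algebra_simps)
  define q where "q = 1 / (D + 1)"
  have q1: "D * q + q = 1"
  proof -
    have "D * q + q = (D + 1) * q" by (simp add: algebra_simps)
    also have "\<dots> = 1" unfolding q_def using n by simp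
    finally show ?thesis .
  qed
  have dq: "D / (D + 1) = D * q" unfolding q_def by simp
  have q2: "1 - D * q = q" using q1 by linarith
  have "D / (D + 1) * (b + 1) + (1 - D / (D + 1)) * (a - 1) = D * q * (b + 1) + q * (a - 1)"
    unfolding dq q2 by simp
  also have "\<dots> = q * (D * (b + 1) + (a - 1))" by (simp add: algebra_simps)
  also have "\<dots> = b * (D * q + q)" unfolding e1 by (simp add: algebra_simps)
  also have "\<dots> = b" unfolding q1 by simp
  finally show ?thesis by simp
qed

lemma decomp:
  fixes c :: "'n::finite \<Rightarrow> nat"
  shows "stable c \<Longrightarrow> Xs c \<Longrightarrow>
    to_vec c \<in> convex hull (to_vec ` {d. stable d \<and> Yc d \<and> level d = level c})"
proof (induction "CARD('n) * (CARD('n) - 1) ^ 2 - sumsq c" arbitrary: c rule: less_induct)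
  case less
  let ?S = "\<lambda>c. to_vec ` {d. stable d \<and> Yc d \<and> level d = level c}"
  show ?case
  proof (cases "Yc c")
    case True
    then show ?thesis using less(2) by (intro hull_inc) blast
  next
    case False
    obtain u v where uv: "u \<noteq> v" "c u \<le> c v" "1 \<le> c u" "c v + 1 \<le> CARD('n) - 1"
      and sl: "\<forall>B. u \<in> B \<and> v \<notin> B \<longrightarrow> (card B choose 2) < sum c B"
      using spread[OF less(2,3) False] by blast
    define c' where "c' = (c(u := c u - 1))(v := c v + 1)"
    define c'' where "c'' = c' \<circ> swp u v"
    have c'u: "c' u = c u - 1" and c'v: "c' v = c v + 1" and c'o: "\<And>w. w \<noteq> u \<Longrightarrow> w \<noteq> v \<Longrightarrow> c' w = c w"
      using uv(1) by (auto simp: c'_def)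
    have pw: "c' w + (if w = u then 1 else 0) = c w + (if w = v then 1 else 0)" for w
      using uv(1,3) by (auto simp: c'_def)
    have st': "stable c'" using less(2) uv unfolding stable_def c'_def by auto
    have X': "Xs c'" unfolding Xs_def
    proof
      fix B :: "'n set"
      have e: "sum c' B + (if u \<in> B then 1 else 0) = sum c B + (if v \<in> B then 1 else 0)"
        by (rule sum_move) (auto simp: pw)
      have XB: "card B choose 2 \<le> sum c B" using less(3) unfolding Xs_def by blast
      show "card B choose 2 \<le> sum c' B"
      proof (cases "u \<in> B \<and> v \<notin> B")
        case True then show ?thesis using sl e by auto
      next
        case False
        show ?thesis
        proof (cases "u \<in> B")
          case True
          then have "v \<in> B" using False by blast
          then show ?thesis using e XB True by simp
        next
          case f2: False
          then show ?thesis using e XB by (cases "v \<in> B") simp_all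
        qed
      qed
    qed
    have sum': "sum c' UNIV = sum c UNIV" using sum_move[of UNIV c' u c v] pw by simp
    have lev': "level c' = level c" unfolding level_def using sum' by simp
    have st'': "stable c''" using st' unfolding stable_def c''_def by simp
    have X'': "Xs c''" unfolding c''_def by (rule Xs_perm[OF X' swp_bij])
    have lev'': "level c'' = level c" unfolding level_def c''_def
      using sum_perm[OF swp_bij, of c' u v] sum' by simp
    have sq': "sumsq c < sumsq c'"
    proof -
      obtain a where a: "c u = a + 1" using uv(3) by (metis add.commute le_Suc_ex Suc_eq_plus1 One_nat_def)
      have "c u ^ 2 + c v ^ 2 < c' u ^ 2 + c' v ^ 2"
      proof -
        have h1: "c u ^ 2 = a ^ 2 + 2 * a + 1" unfolding a by (simp add: power2_eq_square algebra_simps)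
        have h2: "c' v ^ 2 = c v ^ 2 + 2 * c v + 1" unfolding c'v by (simp add: power2_eq_square algebra_simps)
        have h3: "c' u = a" using c'u a by simp
        have h4: "a + 1 \<le> c v" using uv(2) a by simp
        show ?thesis using h1 h2 h3 h4 by simp
      qed
      moreover have "sum (\<lambda>w. c' w ^ 2) (UNIV - {u, v}) = sum (\<lambda>w. c w ^ 2) (UNIV - {u, v})"
        by (rule sum.cong) (auto simp: c'o)
      ultimately show ?thesis unfolding sumsq_def
        using sum_two_pts[OF uv(1), of "\<lambda>w. c w ^ 2"] sum_two_pts[OF uv(1), of "\<lambda>w. c' w ^ 2"] by simp
    qed
    have sq'': "sumsq c'' = sumsq c'" unfolding c''_def by (rule sumsq_perm[OF swp_bij])
    have bnd: "sumsq c' \<le> CARD('n) * (CARD('n) - 1) ^ 2" by (rule sumsq_bound[OF st'])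
    have IH1: "to_vec c' \<in> convex hull ?S c'"
      by (rule less(1)[OF _ st' X']) (use sq' bnd in linarith)
    have IH2: "to_vec c'' \<in> convex hull ?S c''"
      by (rule less(1)[OF _ st'' X'']) (use sq' sq'' bnd in linarith)
    have S1: "?S c' = ?S c" using lev' by simp
    have S2: "?S c'' = ?S c" using lev'' by simp
    define D where "D = real (c v) - real (c u) + 1"
    have D0: "0 < D" using uv(2) unfolding D_def by simp
    define al where "al = D / (D + 1)"
    have al0: "0 \<le> al" "0 \<le> 1 - al" using D0 unfolding al_def by (auto simp: field_simps)
    have comb: "to_vec c = al *\<^sub>R to_vec c' + (1 - al) *\<^sub>R to_vec c''"
    proof (rule vec_eq_iff[THEN iffD2], rule allI)
      fix i
      have c''u: "c'' u = c v + 1" and c''v: "c'' v = c u - 1"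
        and c''o: "i \<noteq> u \<Longrightarrow> i \<noteq> v \<Longrightarrow> c'' i = c i"
        using uv(1) c'u c'v c'o unfolding c''_def swp_def by auto
      have r1: "real (c u - 1) = real (c u) - 1" using uv(3) by (simp add: of_nat_diff)
      show "to_vec c $ i = (al *\<^sub>R to_vec c' + (1 - al) *\<^sub>R to_vec c'') $ i"
      proof (cases "i = u")
        case True
        have "to_vec c $ i = real (c u)" using True by (simp add: to_vec_def)
        moreover have "(al *\<^sub>R to_vec c' + (1 - al) *\<^sub>R to_vec c'') $ i =
            al * (real (c u) - 1) + (1 - al) * (real (c v) + 1)"
          using True c'u c''u r1 by (simp add: to_vec_def)
        moreover have "real (c u) = al * (real (c u) - 1) + (1 - al) * (real (c v) + 1)"
          unfolding al_def by (rule comb_u[OF D0]) (simp add: D_def)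
        ultimately show ?thesis by simp
      next
        case iu: False
        show ?thesis
        proof (cases "i = v")
          case True
          have "to_vec c $ i = real (c v)" using True by (simp add: to_vec_def)
          moreover have "(al *\<^sub>R to_vec c' + (1 - al) *\<^sub>R to_vec c'') $ i =
              al * (real (c v) + 1) + (1 - al) * (real (c u) - 1)"
            using True c'v c''v r1 by (simp add: to_vec_def)
          moreover have "real (c v) = al * (real (c v) + 1) + (1 - al) * (real (c u) - 1)"
            unfolding al_def by (rule comb_v[OF D0]) (simp add: D_def)
          ultimately show ?thesis by simp
        next
          case False
          then show ?thesis using iu c'o c''o unfolding to_vec_def by (simp add: algebra_simps)
        qed
      qed
    qed
    have "al *\<^sub>R to_vec c' + (1 - al) *\<^sub>R to_vec c'' \<in> convex hull ?S c"
    proof (rule convexD[OF convex_convex_hull])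
      show "to_vec c' \<in> convex hull ?S c" using IH1 unfolding lev' .
      show "to_vec c'' \<in> convex hull ?S c" using IH2 unfolding lev'' .
    qed (use al0 in auto)
    then show ?thesis using comb by simp
  qed
qed

lemma convex_P:
  fixes M s :: real and f :: "'n::finite set \<Rightarrow> real"
  shows "convex {x :: real ^ 'n. (\<forall>i. 0 \<le> x $ i \<and> x $ i \<le> M) \<and> (\<forall>A. f A \<le> (\<Sum>i\<in>A. x $ i)) \<and> (\<Sum>i\<in>UNIV. x $ i) = s}"
proof (rule convexI)
  fix x y :: "real ^ 'n" and u v :: real
  assume x: "x \<in> {x :: real ^ 'n. (\<forall>i. 0 \<le> x $ i \<and> x $ i \<le> M) \<and> (\<forall>A. f A \<le> (\<Sum>i\<in>A. x $ i)) \<and> (\<Sum>i\<in>UNIV. x $ i) = s}"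
    and y: "y \<in> {x :: real ^ 'n. (\<forall>i. 0 \<le> x $ i \<and> x $ i \<le> M) \<and> (\<forall>A. f A \<le> (\<Sum>i\<in>A. x $ i)) \<and> (\<Sum>i\<in>UNIV. x $ i) = s}"
    and u: "0 \<le> u" and v: "0 \<le> v" and uv: "u + v = 1"
  have comp: "(u *\<^sub>R x + v *\<^sub>R y) $ i = u * x $ i + v * y $ i" for i by simp
  have sums: "(\<Sum>i\<in>A. (u *\<^sub>R x + v *\<^sub>R y) $ i) = u * (\<Sum>i\<in>A. x $ i) + v * (\<Sum>i\<in>A. y $ i)" for A
    by (simp add: sum.distrib sum_distrib_left)
  show "u *\<^sub>R x + v *\<^sub>R y \<in> {x :: real ^ 'n. (\<forall>i. 0 \<le> x $ i \<and> x $ i \<le> M) \<and> (\<forall>A. f A \<le> (\<Sum>i\<in>A. x $ i)) \<and> (\<Sum>i\<in>UNIV. x $ i) = s}"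
  proof (intro CollectI conjI allI)
    fix i
    have "0 \<le> x $ i" "x $ i \<le> M" "0 \<le> y $ i" "y $ i \<le> M" using x y by auto
    then have "u * x $ i \<le> u * M" "v * y $ i \<le> v * M" "0 \<le> u * x $ i" "0 \<le> v * y $ i"
      using u v by (auto intro: mult_left_mono)
    moreover have "u * M + v * M = M" using uv by (metis distrib_right mult_1)
    ultimately show "0 \<le> (u *\<^sub>R x + v *\<^sub>R y) $ i" "(u *\<^sub>R x + v *\<^sub>R y) $ i \<le> M"
      unfolding comp by linarith+
  next
    fix A
    have "f A \<le> (\<Sum>i\<in>A. x $ i)" "f A \<le> (\<Sum>i\<in>A. y $ i)" using x y by auto
    then have "u * f A \<le> u * (\<Sum>i\<in>A. x $ i)" "v * f A \<le> v * (\<Sum>i\<in>A. y $ i)"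
      using u v by (auto intro: mult_left_mono)
    moreover have "u * f A + v * f A = f A" using uv by (metis distrib_right mult_1)
    ultimately show "f A \<le> (\<Sum>i\<in>A. (u *\<^sub>R x + v *\<^sub>R y) $ i)" unfolding sums by linarith
  next
    have "(\<Sum>i\<in>UNIV. x $ i) = s" "(\<Sum>i\<in>UNIV. y $ i) = s" using x y by auto
    then show "(\<Sum>i\<in>UNIV. (u *\<^sub>R x + v *\<^sub>R y) $ i) = s" unfolding sums
      using uv by (metis distrib_right mult_1)
  qed
qed

theorem mainTheorem11:
  fixes p :: real and \<mu> :: "'n::finite \<Rightarrow> real" and k :: nat
  assumes "0 < p" and "p < 1" and "\<forall>i. \<mu> i > 0"
  shows "to_vec ` {c. SR p \<mu> c \<and> level c = int k} =
    {x :: real ^ 'n. (\<forall>i. x $ i \<in> \<int>) \<and>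
        x \<in> convex hull (to_vec ` {c. DR \<mu> c \<and> level c = int k})}"
proof
  show "to_vec ` {c. SR p \<mu> c \<and> level c = int k} \<subseteq>
    {x :: real ^ 'n. (\<forall>i. x $ i \<in> \<int>) \<and>
        x \<in> convex hull (to_vec ` {c. DR \<mu> c \<and> level c = int k})}"
  proof
    fix x assume "x \<in> to_vec ` {c. SR p \<mu> c \<and> level c = int k}"
    then obtain c where c: "SR p \<mu> c" "level c = int k" "x = to_vec c" by blast
    have sx: "stable c" "Xs c" using c(1) SR_iff[OF assms] by auto
    have h: "to_vec c \<in> convex hull (to_vec ` {d. stable d \<and> Yc d \<and> level d = level c})"
      using decomp sx by blast
    have "{d. stable d \<and> Yc d \<and> level d = level c} \<subseteq> {c. DR \<mu> c \<and> level c = int k}"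
      using Y_DR[OF assms(3)] c(2) by auto
    then have "convex hull (to_vec ` {d. stable d \<and> Yc d \<and> level d = level c}) \<subseteq>
        convex hull (to_vec ` {c. DR \<mu> c \<and> level c = int k})"
      by (intro hull_mono image_mono)
    moreover have "\<forall>i. x $ i \<in> \<int>" using c(3) by (simp add: to_vec_def)
    ultimately show "x \<in> {x :: real ^ 'n. (\<forall>i. x $ i \<in> \<int>) \<and>
        x \<in> convex hull (to_vec ` {c. DR \<mu> c \<and> level c = int k})}" using h c(3) by auto
  qed
next
  show "{x :: real ^ 'n. (\<forall>i. x $ i \<in> \<int>) \<and>
        x \<in> convex hull (to_vec ` {c. DR \<mu> c \<and> level c = int k})} \<subseteq>
    to_vec ` {c. SR p \<mu> c \<and> level c = int k}"
  proof
    fix x :: "real ^ 'n"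
    assume "x \<in> {x :: real ^ 'n. (\<forall>i. x $ i \<in> \<int>) \<and>
        x \<in> convex hull (to_vec ` {c. DR \<mu> c \<and> level c = int k})}"
    then have xi: "\<forall>i. x $ i \<in> \<int>" and xh: "x \<in> convex hull (to_vec ` {c. DR \<mu> c \<and> level c = int k})"
      by auto
    define P where "P = {x :: real ^ 'n. (\<forall>i. 0 \<le> x $ i \<and> x $ i \<le> real (CARD('n) - 1)) \<and>
        (\<forall>A. real (card A choose 2) \<le> (\<Sum>i\<in>A. x $ i)) \<and>
        (\<Sum>i\<in>UNIV. x $ i) = real (CARD('n) choose 2) + real k}"
    have cP: "convex P" unfolding P_def by (rule convex_P)
    have sub: "to_vec ` {c. DR \<mu> c \<and> level c = int k} \<subseteq> P"
    proof
      fix y assume "y \<in> to_vec ` {c. DR \<mu> c \<and> level c = int k}"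
      then obtain c where c: "DR \<mu> c" "level c = int k" "y = to_vec c" by blast
      have sx: "stable c" "Xs c" using DR_Xs[OF assms(1,2,3) c(1)] by auto
      have yi: "y $ i = real (c i)" for i using c(3) by (simp add: to_vec_def)
      have sA: "(\<Sum>i\<in>A. y $ i) = real (sum c A)" for A by (simp add: yi)
      have lev: "sum c UNIV = (CARD('n) choose 2) + k" using c(2) unfolding level_def by linarith
      show "y \<in> P" unfolding P_def
      proof (intro CollectI conjI allI)
        fix i
        show "0 \<le> y $ i" by (simp add: yi)
        have "c i \<le> CARD('n) - 1" using sx(1) unfolding stable_def by blast
        then show "y $ i \<le> real (CARD('n) - 1)" unfolding yi by (rule of_nat_mono)
      next
        fix A :: "'n set"
        have "card A choose 2 \<le> sum c A" using sx(2) unfolding Xs_def by blast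
        then show "real (card A choose 2) \<le> (\<Sum>i\<in>A. y $ i)" unfolding sA by (rule of_nat_mono)
      next
        show "(\<Sum>i\<in>UNIV. y $ i) = real (CARD('n) choose 2) + real k" unfolding sA lev by simp
      qed
    qed
    have "convex hull (to_vec ` {c. DR \<mu> c \<and> level c = int k}) \<subseteq> P"
      by (rule hull_minimal[where S=convex, OF sub cP])
    then have xP: "x \<in> P" using xh by blast
    define c where "c = (\<lambda>i. nat \<lfloor>x $ i\<rfloor>)"
    have ci: "real (c i) = x $ i" for i
    proof -
      obtain z where z: "x $ i = of_int z" using xi Ints_cases by metis
      have "0 \<le> x $ i" using xP unfolding P_def by blast
      then have "0 \<le> z" using z by simp
      then show ?thesis unfolding c_def z by simp
    qed
    have xc: "x = to_vec c" unfolding to_vec_def using ci by (simp add: vec_eq_iff)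
    have sA: "(\<Sum>i\<in>A. x $ i) = real (sum c A)" for A by (simp add: ci[symmetric])
    have st: "stable c" unfolding stable_def
    proof
      fix i
      have "x $ i \<le> real (CARD('n) - 1)" using xP unfolding P_def by blast
      then show "c i \<le> CARD('n) - 1" using ci[of i] by linarith
    qed
    have X: "Xs c" unfolding Xs_def
    proof
      fix A :: "'n set"
      have "real (card A choose 2) \<le> (\<Sum>i\<in>A. x $ i)" using xP unfolding P_def by blast
      then show "card A choose 2 \<le> sum c A" unfolding sA by linarith
    qed
    have "(\<Sum>i\<in>UNIV. x $ i) = real (CARD('n) choose 2) + real k" using xP unfolding P_def by blast
    then have "real (sum c UNIV) = real ((CARD('n) choose 2) + k)" unfolding sA by simp
    then have "sum c UNIV = (CARD('n) choose 2) + k" using of_nat_eq_iff by blast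
    then have lev: "level c = int k" unfolding level_def by simp
    have "SR p \<mu> c" using SR_iff[OF assms] st X by blast
    then show "x \<in> to_vec ` {c. SR p \<mu> c \<and> level c = int k}" using lev xc by blast
  qed
qed

end
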